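(* Let $\{|\psi_v^A\rangle\otimes|\psi_v^B\rangle\}_{v=1}^r$ be a set of mutually orthogonal product states in $\mathcal H_A\otimes\mathcal H_B$ (finite-dimensional, all factors nonzero) with graphs $G_A$ and $G_B$. If there exist an integer $k\ge1$ and a graph $G$ on the vertex set $\{1,\dots,r\}$ with $G_A\le G\le\overline{G_B}$ such that $G$ is a $k$-tree, then the states are perfectly distinguishable by one-way LOCC with Alice measuring first.
   Context: $G_A$ has vertex set $\{1,\dots,r\}$ with an edge $\{u,v\}$ ($u\ne v$) iff $\langle\psi_u^A|\psi_v^A\rangle\ne0$; $G_B$ likewise with Bob's vectors; $\overline{G}$ is the complement graph; for graphs on the same vertex set, $H\le G$ means the edge set of $H$ is contained in that of $G$. A vertex is simplicial if its neighbourhood induces a complete graph. A perfect elimination ordering of a graph $G$ on $n$ vertices is an ordering $v_1,\dots,v_n$ of its vertices such that each $v_i$ is simplicial in the subgraph induced by $\{v_i,\dots,v_n\}$. $G$ is a $k$-tree if it has a perfect elimination ordering $v_1,\dots,v_n$ such that (1) for all $i<n-k$, $v_i$ has degree exactly $k$ in the subgraph induced by $\{v_i,\dots,v_n\}$, and (2) the subgraph induced by $\{v_{n-k},\dots,v_n\}$ is a complete graph on $k+1$ vertices. One-way LOCC with Alice first: there exist positive semidefinite $Q_1,\dots,Q_N$ on $\mathcal H_A$ with $\sum_jQ_j=I$ and, for each $j$, positive semidefinite $R^{(j)}_1,\dots,R^{(j)}_r$ on $\mathcal H_B$ with $\sum_kR^{(j)}_k=I$, such that $\langle\psi_l|Q_j\otimes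 R^{(j)}_k|\psi_l\rangle=0$ for all $j$ and $k\ne l$. *)

theory Defs
  imports "HOL-Analysis.Analysis"
begin

text \<open>Finite-dimensional complex Hilbert spaces are modelled as complex^'a for a finite
index type 'a (automatically nonzero-dimensional). Operators are complex^'a^'a.\<close>

definition cinner :: "complex^'a::finite \<Rightarrow> complex^'a \<Rightarrow> complex" where
  "cinner x y = (\<Sum>i\<in>UNIV. cnj (x $ i) * y $ i)"

definition psd :: "complex^'a::finite^'a \<Rightarrow> bool" where
  "psd M \<longleftrightarrow> (\<forall>x. Im (cinner x (M *v x)) = 0 \<and> Re (cinner x (M *v x)) \<ge> 0)"

definition tensor_vec :: "complex^'a::finite \<Rightarrow> complex^'b::finite \<Rightarrow> complex^('a \<times> 'b)" where
  "tensor_vec x y = (\<chi> p. x $ fst p * y $ snd p)"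

definition tensor_mat :: "complex^'a::finite^'a \<Rightarrow> complex^'b::finite^'b \<Rightarrow> complex^('a \<times> 'b)^('a \<times> 'b)" where
  "tensor_mat A B = (\<chi> p q. A $ fst p $ fst q * B $ snd p $ snd q)"

definition graph_on :: "nat set \<Rightarrow> (nat \<Rightarrow> nat \<Rightarrow> bool) \<Rightarrow> bool" where
  "graph_on V G \<longleftrightarrow> (\<forall>u v. G u v \<longrightarrow> u \<in> V \<and> v \<in> V \<and> u \<noteq> v \<and> G v u)"

definition subgraph_le :: "(nat \<Rightarrow> nat \<Rightarrow> bool) \<Rightarrow> (nat \<Rightarrow> nat \<Rightarrow> bool) \<Rightarrow> bool" where
  "subgraph_le H G \<longleftrightarrow> (\<forall>u v. H u v \<longrightarrow> G u v)"

definition complement_graph :: "nat set \<Rightarrow> (nat \<Rightarrow> nat \<Rightarrow> bool) \<Rightarrow> nat \<Rightarrow> nat \<Rightarrow> bool" where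
  "complement_graph V G u v \<longleftrightarrow> u \<in> V \<and> v \<in> V \<and> u \<noteq> v \<and> \<not> G u v"

definition vec_graph :: "nat \<Rightarrow> (nat \<Rightarrow> complex^'a::finite) \<Rightarrow> nat \<Rightarrow> nat \<Rightarrow> bool" where
  "vec_graph r psi u v \<longleftrightarrow> u \<in> {1..r} \<and> v \<in> {1..r} \<and> u \<noteq> v \<and> cinner (psi u) (psi v) \<noteq> 0"

definition simplicial_in :: "(nat \<Rightarrow> nat \<Rightarrow> bool) \<Rightarrow> nat set \<Rightarrow> nat \<Rightarrow> bool" where
  "simplicial_in G S v \<longleftrightarrow>
     (\<forall>x\<in>S. \<forall>y\<in>S. G v x \<and> G v y \<and> x \<noteq> y \<longrightarrow> G x y)"

definition peo :: "nat set \<Rightarrow> (nat \<Rightarrow> nat \<Rightarrow> bool) \<Rightarrow> nat list \<Rightarrow> bool" where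
  "peo V G vs \<longleftrightarrow> distinct vs \<and> set vs = V \<and>
     (\<forall>i < length vs. simplicial_in G (set (drop i vs)) (vs ! i))"

text \<open>k-tree: 1-indexed condition i < n-k becomes 0-indexed j < n-k-1; the final block
  {v_{n-k},...,v_n} is set (drop (n-k-1) vs), required to be a complete graph on k+1 vertices.\<close>
definition k_tree :: "nat set \<Rightarrow> (nat \<Rightarrow> nat \<Rightarrow> bool) \<Rightarrow> nat \<Rightarrow> bool" where
  "k_tree V G k \<longleftrightarrow> (\<exists>vs. peo V G vs \<and>
     (let n = length vs in
       (\<forall>j. j < n - k - 1 \<longrightarrow> card {x \<in> set (drop j vs). G (vs ! j) x} = k) \<and>
       card (set (drop (n - k - 1) vs)) = k + 1 \<and>
       (\<forall>x \<in> set (drop (n - k - 1) vs). \<forall>y \<in> set (drop (n - k - 1) vs). x \<noteq> y \<longrightarrow> G x y)))"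

definition one_way_LOCC_A :: "nat \<Rightarrow> (nat \<Rightarrow> complex^'a::finite) \<Rightarrow> (nat \<Rightarrow> complex^'b::finite) \<Rightarrow> bool" where
  "one_way_LOCC_A r psiA psiB \<longleftrightarrow>
     (\<exists>(N::nat) (Q :: nat \<Rightarrow> complex^'a^'a) (R :: nat \<Rightarrow> nat \<Rightarrow> complex^'b^'b).
        (\<forall>j<N. psd (Q j)) \<and> (\<Sum>j<N. Q j) = mat 1 \<and>
        (\<forall>j<N. (\<forall>k\<in>{1..r}. psd (R j k)) \<and> (\<Sum>k\<in>{1..r}. R j k) = mat 1) \<and>
        (\<forall>j<N. \<forall>k\<in>{1..r}. \<forall>l\<in>{1..r}. k \<noteq> l \<longrightarrow>
           cinner (tensor_vec (psiA l) (psiB l))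
                  (tensor_mat (Q j) (R j k) *v tensor_vec (psiA l) (psiB l)) = 0))"

end

theory Submission
  imports Defs
begin

lemma cinner_add_right: "cinner x (y + z) = cinner x y + cinner x z"
  by (simp add: cinner_def sum.distrib distrib_left)
lemma cinner_diff_right: "cinner x (y - z) = cinner x y - cinner x z"
  by (simp add: cinner_def sum_subtractf right_diff_distrib)
lemma cinner_diff_left: "cinner (y - z) x = cinner y x - cinner z x"
  by (simp add: cinner_def sum_subtractf left_diff_distrib)
lemma mult_sum_list: "A *v sum_list (map f ys) = sum_list (map (\<lambda>y. A *v f y) ys)"
  by (induction ys) (auto simp: matrix_vector_right_distrib)
lemma cinner_scale_right: "cinner x (c *s y) = c * cinner x y"
  by (simp add: cinner_def sum_distrib_left mult_ac)
lemma cinner_scale_left: "cinner (c *s x) y = cnj c * cinner x y"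
  by (simp add: cinner_def sum_distrib_left mult_ac)
lemma cinner_zero_left[simp]: "cinner 0 y = 0" by (simp add: cinner_def)
lemma cinner_zero_right[simp]: "cinner x 0 = 0" by (simp add: cinner_def)
lemma cinner_commute: "cinner y x = cnj (cinner x y)"
  by (simp add: cinner_def mult.commute)
lemma cinner_self: "cinner x x = of_real (\<Sum>i\<in>UNIV. (norm (x$i))^2)"
  unfolding cinner_def of_real_sum
  by (rule sum.cong[OF refl], subst complex_norm_square) (simp add: mult.commute)
lemma cinner_self_zero: "cinner x x = 0 \<Longrightarrow> x = 0"
proof -
  assume "cinner x x = 0"
  then have "complex_of_real (\<Sum>i\<in>UNIV. (norm (x$i))^2) = 0" using cinner_self by metis
  then have "(\<Sum>i\<in>UNIV. (norm (x$i))^2) = 0" by (simp only: of_real_eq_0_iff)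
  then have "\<forall>i\<in>UNIV. (norm (x$i))^2 = 0" by (subst (asm) sum_nonneg_eq_0_iff) auto
  then show "x = 0" by (simp add: vec_eq_iff)
qed
lemma cinner_sum_right: "cinner x (sum_list (map f ys)) = sum_list (map (\<lambda>y. cinner x (f y)) ys)"
  by (induction ys) (auto simp: cinner_add_right)
lemma cinner_sumset_right: "finite S \<Longrightarrow> cinner x (\<Sum>i\<in>S. f i) = (\<Sum>i\<in>S. cinner x (f i))"
  by (induction S rule: finite_induct) (auto simp: cinner_add_right)
lemma mat_sumset_mult: "finite S \<Longrightarrow> (\<Sum>i\<in>S. M i) *v x = (\<Sum>i\<in>S. M i *v x)"
  by (induction S rule: finite_induct) (auto simp: matrix_vector_mult_add_rdistrib)
lemma mat_sum_list_mult: "sum_list Ms *v x = sum_list (map (\<lambda>M. M *v x) Ms)"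
  by (induction Ms) (auto simp: matrix_vector_mult_add_rdistrib)

lemma real_nonneg_iff: "(Im z = 0 \<and> Re z \<ge> 0) \<longleftrightarrow> (\<exists>t\<ge>0. z = complex_of_real t)"
proof
  assume a: "Im z = 0 \<and> Re z \<ge> 0"
  then have "z = complex_of_real (Re z)" by (simp add: complex_eq_iff)
  then show "\<exists>t\<ge>0. z = complex_of_real t" using a by blast
qed auto
lemma psd_iff: "psd M \<longleftrightarrow> (\<forall>x. \<exists>t\<ge>0. cinner x (M *v x) = of_real t)"
  unfolding psd_def by (simp only: real_nonneg_iff)
lemma psd_add: "psd A \<Longrightarrow> psd B \<Longrightarrow> psd (A + B)"
  by (simp add: psd_def matrix_vector_mult_add_rdistrib cinner_add_right)
lemma psd_zero: "psd 0" by (simp add: psd_def)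
lemma psd_sumset: "finite S \<Longrightarrow> \<forall>i\<in>S. psd (M i) \<Longrightarrow> psd (\<Sum>i\<in>S. M i)"
  by (induction S rule: finite_induct) (auto simp: psd_zero psd_add)
lemma psd_mat1: "psd (mat 1)"
  by (simp add: psd_def cinner_self sum_nonneg)

definition proj :: "complex^'a::finite \<Rightarrow> complex^'a^'a" where
  "proj v = (\<chi> i j. v$i * cnj (v$j) / cinner v v)"

lemma proj_mult: "proj v *v x = (cinner v x / cinner v v) *s v"
proof -
  have "(proj v *v x)$i = ((cinner v x / cinner v v) *s v)$i" for i
  proof -
    have "(proj v *v x)$i = (\<Sum>j\<in>UNIV. v$i * cnj (v$j) / cinner v v * x$j)"
      by (simp add: matrix_vector_mult_def proj_def)
    also have "... = (\<Sum>j\<in>UNIV. cnj (v$j) * x$j) / cinner v v * v$i"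
      unfolding sum_divide_distrib sum_distrib_right by (rule sum.cong) (simp_all add: divide_inverse mult_ac)
    finally show ?thesis by (simp add: cinner_def)
  qed
  then show ?thesis by (simp add: vec_eq_iff)
qed

lemma cinner_self_real: "cnj (cinner v v) = cinner v v"
  by (rule cinner_commute[of v v, symmetric])

lemma proj_idem: "proj v *v (proj v *v x) = proj v *v x"
proof (cases "cinner v v = 0")
  case True then show ?thesis by (simp add: proj_mult)
next
  case False then show ?thesis by (simp add: proj_mult cinner_scale_right)
qed

lemma proj_v: "proj v *v v = v"
proof (cases "cinner v v = 0")
  case True then show ?thesis using cinner_self_zero by (simp add: proj_mult)
next
  case False then show ?thesis by (simp add: proj_mult)
qed

lemma cinner_proj: "cinner x (proj v *v y) = cinner x v * cinner v y / cinner v v"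
  by (simp add: proj_mult cinner_scale_right)

lemma cinner_proj_herm: "cinner x (proj v *v y) = cinner (proj v *v x) y"
  by (simp add: proj_mult cinner_scale_left cinner_scale_right cinner_self_real cinner_commute[of v x] mult.commute)

lemma psd_proj: "psd (proj v)"
  unfolding psd_iff
proof
  fix x
  define S where "S = (\<Sum>i\<in>UNIV. (norm (v$i))^2)"
  have c: "cinner v v = of_real S" unfolding S_def by (rule cinner_self)
  have "cinner x (proj v *v x) = cinner x v * cnj (cinner x v) / cinner v v"
    by (simp add: cinner_proj cinner_commute[of v x])
  also have "... = of_real ((norm (cinner x v))^2) / of_real S" by (simp only: complex_norm_square c)
  also have "... = of_real ((norm (cinner x v))^2 / S)" by (simp only: of_real_divide)
  finally have e: "cinner x (proj v *v x) = of_real ((norm (cinner x v))^2 / S)" .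
  have "S \<ge> 0" unfolding S_def by (simp add: sum_nonneg)
  then have "(norm (cinner x v))^2 / S \<ge> 0" by simp
  with e show "\<exists>t\<ge>0. cinner x (proj v *v x) = complex_of_real t" by blast
qed

lemma core:
  fixes psi :: "nat \<Rightarrow> complex^'a::finite"
  assumes "\<forall>i<length vs. simplicial_in G (set (drop i vs)) (vs!i)"
    and "\<forall>l\<in>set vs. \<forall>m\<in>set vs. l\<noteq>m \<and> \<not>G l m \<longrightarrow> cinner (psi l) (psi m) = 0"
  shows "\<exists>qs. (\<forall>Q\<in>set qs. psd Q) \<and> sum_list qs = mat 1 \<and>
     (\<forall>Q\<in>set qs. \<forall>l\<in>set vs. \<forall>m\<in>set vs. l\<noteq>m \<and> cinner (psi l) (Q *v psi l) \<noteq> 0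
         \<and> cinner (psi m) (Q *v psi m) \<noteq> 0 \<longrightarrow> G l m)"
  using assms
proof (induction vs arbitrary: psi)
  case Nil show ?case by (intro exI[of _ "[mat 1]"]) (auto simp: psd_mat1)
next
  case (Cons v ws)
  define P where "P = proj (psi v)"
  define E where "E = mat 1 - P"
  define psi' where "psi' = (\<lambda>l. E *v psi l)"
  have Ex: "\<And>x. E *v x = x - P *v x"
    unfolding E_def by (simp only: matrix_vector_mult_diff_rdistrib matrix_vector_mul_lid)
  have EE: "E *v (E *v x) = E *v x" for x
  proof -
    have "E *v (E *v x) = (x - P *v x) - (P *v x - P *v (P *v x))"
      by (simp only: Ex matrix_vector_mult_diff_distrib)
    also have "... = x - P *v x" unfolding P_def proj_idem by simp
    also have "... = E *v x" by (simp only: Ex)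
    finally show ?thesis .
  qed
  have Eh: "\<And>x y. cinner x (E *v y) = cinner (E *v x) y"
    by (simp only: Ex cinner_diff_right cinner_diff_left P_def cinner_proj_herm)
  have Ev: "E *v psi v = 0" unfolding Ex P_def proj_v by simp
  have simp_v: "\<forall>x\<in>set (v#ws). \<forall>y\<in>set (v#ws). G v x \<and> G v y \<and> x\<noteq>y \<longrightarrow> G x y"
    using Cons.prems(1)[rule_format, of 0] by (simp add: simplicial_in_def)
  have tail: "\<forall>i<length ws. simplicial_in G (set (drop i ws)) (ws!i)"
  proof (intro allI impI)
    fix i assume "i < length ws"
    then show "simplicial_in G (set (drop i ws)) (ws!i)"
      using Cons.prems(1)[rule_format, of "Suc i"] by simp
  qed
  have adj: "\<And>l. l \<in> set (v#ws) \<Longrightarrow> l \<noteq> v \<Longrightarrow> cinner (psi v) (psi l) \<noteq> 0 \<Longrightarrow> G v l"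
    using Cons.prems(2) by auto
  have adj2: "\<And>l. l \<in> set (v#ws) \<Longrightarrow> l \<noteq> v \<Longrightarrow> cinner (psi l) (psi v) \<noteq> 0 \<Longrightarrow> G l v"
    using Cons.prems(2) by auto
  have cz: "\<And>x y. cinner x y \<noteq> 0 \<Longrightarrow> cinner y x \<noteq> 0"
    by (subst cinner_commute) simp
  have orth': "\<forall>l\<in>set ws. \<forall>m\<in>set ws. l\<noteq>m \<and> \<not>G l m \<longrightarrow> cinner (psi' l) (psi' m) = 0"
  proof (intro ballI impI)
    fix l m assume lm: "l\<in>set ws" "m\<in>set ws" "l\<noteq>m \<and> \<not>G l m"
    show "cinner (psi' l) (psi' m) = 0"
    proof (cases "l = v \<or> m = v")
      case True then show ?thesis by (auto simp: psi'_def Ev)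
    next
      case False
      have "cinner (psi' l) (psi' m) = cinner (psi l) (E *v (E *v psi m))" unfolding psi'_def by (rule Eh[symmetric])
      also have "... = cinner (psi l) (psi m) - cinner (psi l) (psi v) * cinner (psi v) (psi m) / cinner (psi v) (psi v)"
        unfolding EE by (simp only: Ex cinner_diff_right P_def cinner_proj)
      also have "cinner (psi l) (psi m) = 0" using Cons.prems(2)[rule_format, of l m] lm by simp
      also have "cinner (psi l) (psi v) * cinner (psi v) (psi m) = 0"
      proof (rule ccontr)
        assume "cinner (psi l) (psi v) * cinner (psi v) (psi m) \<noteq> 0"
        then have n1: "cinner (psi l) (psi v) \<noteq> 0" and n2: "cinner (psi v) (psi m) \<noteq> 0" by auto
        have "G v l" using adj[OF _ _ cz[OF n1]] lm False by simp
        moreover have "G v m" using adj[OF _ _ n2] lm False by simp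
        ultimately have "G l m" using simp_v[rule_format, of l m] lm by simp
        with lm show False by simp
      qed
      finally show ?thesis by simp
    qed
  qed
  obtain qs' where qs': "\<forall>Q\<in>set qs'. psd Q" "sum_list qs' = mat 1"
    "\<forall>Q\<in>set qs'. \<forall>l\<in>set ws. \<forall>m\<in>set ws. l\<noteq>m \<and> cinner (psi' l) (Q *v psi' l) \<noteq> 0
         \<and> cinner (psi' m) (Q *v psi' m) \<noteq> 0 \<longrightarrow> G l m"
    using Cons.IH[OF tail orth'] by blast
  have EQE: "\<And>Q x. cinner x ((E ** Q ** E) *v x) = cinner (E *v x) (Q *v (E *v x))"
    by (simp add: matrix_vector_mul_assoc[symmetric] Eh)
  define qs where "qs = P # map (\<lambda>Q. E ** Q ** E) qs'"
  show ?case
  proof (intro exI[of _ qs] conjI)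
    show "\<forall>Q\<in>set qs. psd Q"
    proof
      fix Q assume "Q \<in> set qs"
      then consider "Q = P" | Q' where "Q' \<in> set qs'" "Q = E ** Q' ** E" by (auto simp: qs_def)
      then show "psd Q"
      proof cases
        case 1 then show ?thesis by (simp add: P_def psd_proj)
      next
        case 2 then show ?thesis using qs'(1) unfolding psd_def by (simp add: EQE)
      qed
    qed
    show "sum_list qs = mat 1"
      unfolding matrix_eq
    proof
      fix x
      have "sum_list (map (\<lambda>Q. E ** Q ** E) qs') *v x = sum_list (map (\<lambda>Q. E *v (Q *v (E *v x))) qs')"
        by (simp add: mat_sum_list_mult o_def matrix_vector_mul_assoc matrix_mul_assoc)
      also have "... = E *v (sum_list qs' *v (E *v x))"
        by (simp add: mult_sum_list mat_sum_list_mult)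
      also have "... = E *v x" using qs'(2) by (simp add: EE)
      finally show "sum_list qs *v x = mat 1 *v x"
        by (simp add: qs_def matrix_vector_mult_add_rdistrib Ex)
    qed
    show "\<forall>Q\<in>set qs. \<forall>l\<in>set (v#ws). \<forall>m\<in>set (v#ws). l\<noteq>m \<and> cinner (psi l) (Q *v psi l) \<noteq> 0
         \<and> cinner (psi m) (Q *v psi m) \<noteq> 0 \<longrightarrow> G l m"
    proof (intro ballI impI)
      fix Q l m assume Q: "Q \<in> set qs" and lm: "l \<in> set (v#ws)" "m \<in> set (v#ws)"
        and act: "l\<noteq>m \<and> cinner (psi l) (Q *v psi l) \<noteq> 0 \<and> cinner (psi m) (Q *v psi m) \<noteq> 0"
      from Q consider "Q = P" | Q' where "Q' \<in> set qs'" "Q = E ** Q' ** E" by (auto simp: qs_def)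
      then show "G l m"
      proof cases
        case 1
        have "cinner (psi v) (psi l) \<noteq> 0" "cinner (psi v) (psi m) \<noteq> 0"
          "cinner (psi l) (psi v) \<noteq> 0" "cinner (psi m) (psi v) \<noteq> 0"
          using act 1 by (auto simp: P_def cinner_proj)
        note nz = this
        show ?thesis
        proof (cases "l = v")
          case True
          then have "m \<noteq> v" using act by auto
          then show ?thesis using adj[OF lm(2) _ nz(2)] True by simp
        next
          case lv: False
          show ?thesis
          proof (cases "m = v")
            case True
            then show ?thesis using adj2[OF lm(1) lv nz(3)] by simp
          next
            case False
            have "G v l" "G v m" using adj[OF lm(1) lv nz(1)] adj[OF lm(2) False nz(2)] by auto
            then show ?thesis using simp_v lm act by blast
          qed
        qed
      next
        case 2
        have a: "cinner (psi' l) (Q' *v psi' l) \<noteq> 0" "cinner (psi' m) (Q' *v psi' m) \<noteq> 0"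
          using act 2 by (auto simp: EQE psi'_def)
        then have "l \<noteq> v" "m \<noteq> v" by (auto simp: psi'_def Ev)
        then have "l \<in> set ws" "m \<in> set ws" using lm by auto
        then show ?thesis using qs'(3) 2 a act by blast
      qed
    qed
  qed
qed

lemma tensor_mult: "tensor_mat A B *v tensor_vec x y = tensor_vec (A *v x) (B *v y)"
  by (simp add: vec_eq_iff matrix_vector_mult_def tensor_mat_def tensor_vec_def sum_product
      UNIV_Times_UNIV[symmetric] sum.cartesian_product mult_ac case_prod_unfold del: UNIV_Times_UNIV)

lemma tensor_inner: "cinner (tensor_vec a b) (tensor_vec c d) = cinner a c * cinner b d"
  by (simp add: cinner_def tensor_vec_def sum_product
      UNIV_Times_UNIV[symmetric] sum.cartesian_product mult_ac case_prod_unfold del: UNIV_Times_UNIV)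

theorem mainTheorem6:
  fixes r :: nat
    and psiA :: "nat \<Rightarrow> complex^'a::finite"
    and psiB :: "nat \<Rightarrow> complex^'b::finite"
    and G :: "nat \<Rightarrow> nat \<Rightarrow> bool"
    and k :: nat
  assumes unitA: "\<forall>v\<in>{1..r}. cinner (psiA v) (psiA v) = 1"
    and unitB: "\<forall>v\<in>{1..r}. cinner (psiB v) (psiB v) = 1"
    and orth: "\<forall>u\<in>{1..r}. \<forall>v\<in>{1..r}. u \<noteq> v \<longrightarrow>
                 cinner (tensor_vec (psiA u) (psiB u)) (tensor_vec (psiA v) (psiB v)) = 0"
    and k_pos: "k \<ge> 1"
    and G_graph: "graph_on {1..r} G"
    and GA_le: "subgraph_le (vec_graph r psiA) G"
    and le_coGB: "subgraph_le G (complement_graph {1..r} (vec_graph r psiB))"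
    and ktree: "k_tree {1..r} G k"
  shows "one_way_LOCC_A r psiA psiB"
proof -
  obtain vs where pe: "peo {1..r} G vs"
    and cardk: "card (set (drop (length vs - k - 1) vs)) = k + 1"
    using ktree unfolding k_tree_def Let_def by blast
  have setvs: "set vs = {1..r}" and simpl: "\<forall>i<length vs. simplicial_in G (set (drop i vs)) (vs!i)"
    using pe unfolding peo_def by auto
  have "set (drop (length vs - k - 1) vs) \<noteq> {}" using cardk by (metis card.empty add_is_0 one_neq_zero)
  then have "set vs \<noteq> {}" using set_drop_subset[of "length vs - k - 1" vs] by (metis subset_empty)
  then have r1: "1 \<in> {1..r}" using setvs by auto
  have orthA: "\<forall>l\<in>set vs. \<forall>m\<in>set vs. l\<noteq>m \<and> \<not>G l m \<longrightarrow> cinner (psiA l) (psiA m) = 0"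
  proof (intro ballI impI)
    fix l m assume "l\<in>set vs" "m\<in>set vs" "l\<noteq>m \<and> \<not>G l m"
    then show "cinner (psiA l) (psiA m) = 0"
      using GA_le setvs unfolding subgraph_le_def vec_graph_def by blast
  qed
  obtain qsA where qA: "\<forall>Q\<in>set qsA. psd Q" "sum_list qsA = mat 1"
     "\<forall>Q\<in>set qsA. \<forall>l\<in>set vs. \<forall>m\<in>set vs. l\<noteq>m \<and> cinner (psiA l) (Q *v psiA l) \<noteq> 0
         \<and> cinner (psiA m) (Q *v psiA m) \<noteq> 0 \<longrightarrow> G l m"
    using core[OF simpl orthA] by blast
  define N where "N = length qsA"
  define Q where "Q = (\<lambda>j. qsA ! j)"
  define S where "S = (\<lambda>j. {l\<in>{1..r}. cinner (psiA l) (Q j *v psiA l) \<noteq> 0})"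
  define vsB where "vsB = (\<lambda>j. filter (\<lambda>l. l \<in> S j) [1..<r+1])"
  have setB: "\<And>j. set (vsB j) = S j" by (auto simp: vsB_def S_def)
  have "\<forall>j. \<exists>qs. j < N \<longrightarrow> (\<forall>Q\<in>set qs. psd Q) \<and> sum_list qs = mat 1 \<and>
     (\<forall>Q\<in>set qs. \<forall>l\<in>set (vsB j). \<forall>m\<in>set (vsB j). l\<noteq>m \<and> cinner (psiB l) (Q *v psiB l) \<noteq> 0
         \<and> cinner (psiB m) (Q *v psiB m) \<noteq> 0 \<longrightarrow> False)"
  proof
    fix j
    show "\<exists>qs. j < N \<longrightarrow> (\<forall>Q\<in>set qs. psd Q) \<and> sum_list qs = mat 1 \<and>
     (\<forall>Q\<in>set qs. \<forall>l\<in>set (vsB j). \<forall>m\<in>set (vsB j). l\<noteq>m \<and> cinner (psiB l) (Q *v psiB l) \<noteq> 0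
         \<and> cinner (psiB m) (Q *v psiB m) \<noteq> 0 \<longrightarrow> False)"
    proof (cases "j < N")
      case False then show ?thesis by blast
    next
      case True
      have Qj: "Q j \<in> set qsA" using True by (simp add: Q_def N_def)
      have s: "\<forall>i<length (vsB j). simplicial_in (\<lambda>_ _. False) (set (drop i (vsB j))) (vsB j!i)"
        by (simp add: simplicial_in_def)
      have o: "\<forall>l\<in>set (vsB j). \<forall>m\<in>set (vsB j). l\<noteq>m \<and> \<not>False \<longrightarrow> cinner (psiB l) (psiB m) = 0"
      proof (intro ballI impI)
        fix l m assume lm: "l\<in>set (vsB j)" "m\<in>set (vsB j)" "l\<noteq>m \<and> \<not>False"
        then have "G l m" using qA(3) Qj setvs by (auto simp: setB S_def)
        then show "cinner (psiB l) (psiB m) = 0" using le_coGB lm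
          unfolding subgraph_le_def complement_graph_def vec_graph_def by (auto simp: setB S_def)
      qed
      show ?thesis using core[OF s o] by blast
    qed
  qed
  from choice[OF this] obtain B where B0: "\<forall>j. j < N \<longrightarrow> (\<forall>Q\<in>set (B j). psd Q) \<and> sum_list (B j) = mat 1 \<and>
     (\<forall>Q\<in>set (B j). \<forall>l\<in>set (vsB j). \<forall>m\<in>set (vsB j). l\<noteq>m \<and> cinner (psiB l) (Q *v psiB l) \<noteq> 0
         \<and> cinner (psiB m) (Q *v psiB m) \<noteq> 0 \<longrightarrow> False)" ..
  note B = B0[rule_format]
  define act where "act = (\<lambda>j i l. l \<in> S j \<and> cinner (psiB l) ((B j ! i) *v psiB l) \<noteq> 0)"
  define f where "f = (\<lambda>j i. if \<exists>l. act j i l then (SOME l. act j i l) else 1)"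
  define R where "R = (\<lambda>j k. \<Sum>i\<in>{i. i \<in> {..<length (B j)} \<and> f j i = k}. B j ! i)"
  have frange: "\<And>j i. f j i \<in> {1..r}"
  proof -
    fix j i
    show "f j i \<in> {1..r}"
    proof (cases "\<exists>l. act j i l")
      case True
      then have "act j i (SOME l. act j i l)" by (rule someI_ex)
      then show ?thesis using True by (auto simp: f_def act_def S_def)
    next
      case False
      then have "f j i = 1" unfolding f_def by (simp only: if_False)
      then show ?thesis using r1 by simp
    qed
  qed
  show ?thesis
    unfolding one_way_LOCC_A_def
  proof (intro exI[of _ N] exI[of _ Q] exI[of _ R] conjI)
    show "\<forall>j<N. psd (Q j)" using qA(1) by (simp add: Q_def N_def)
    show "(\<Sum>j<N. Q j) = mat 1" using qA(2)
      by (simp add: Q_def N_def sum_list_sum_nth atLeast0LessThan)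
    show "\<forall>j<N. (\<forall>k\<in>{1..r}. psd (R j k)) \<and> (\<Sum>k\<in>{1..r}. R j k) = mat 1"
    proof (intro allI impI conjI ballI)
      fix j k assume j: "j < N"
      show "psd (R j k)" unfolding R_def
        using B[OF j] by (intro psd_sumset) auto
    next
      fix j assume j: "j < N"
      have "(\<Sum>k\<in>{1..r}. R j k) = (\<Sum>i\<in>{..<length (B j)}. B j ! i)"
        unfolding R_def by (rule sum.group) (use frange in auto)
      also have "... = mat 1" using B[OF j] by (simp add: sum_list_sum_nth atLeast0LessThan)
      finally show "(\<Sum>k\<in>{1..r}. R j k) = mat 1" .
    qed
    show "\<forall>j<N. \<forall>k\<in>{1..r}. \<forall>l\<in>{1..r}. k \<noteq> l \<longrightarrow>
           cinner (tensor_vec (psiA l) (psiB l))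
                  (tensor_mat (Q j) (R j k) *v tensor_vec (psiA l) (psiB l)) = 0"
    proof (intro allI impI ballI)
      fix j k l assume j: "j < N" and k: "k \<in> {1..r}" and l: "l \<in> {1..r}" and kl: "k \<noteq> l"
      show "cinner (tensor_vec (psiA l) (psiB l))
                  (tensor_mat (Q j) (R j k) *v tensor_vec (psiA l) (psiB l)) = 0"
      proof (cases "cinner (psiA l) (Q j *v psiA l) = 0")
        case True then show ?thesis by (simp add: tensor_mult tensor_inner)
      next
        case False
        then have lS: "l \<in> S j" using l by (simp add: S_def)
        have fin: "finite {i. i \<in> {..<length (B j)} \<and> f j i = k}" by simp
        have "cinner (psiB l) (R j k *v psiB l) = (\<Sum>i\<in>{i. i \<in> {..<length (B j)} \<and> f j i = k}. cinner (psiB l) (B j ! i *v psiB l))"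
          unfolding R_def by (simp only: mat_sumset_mult[OF fin] cinner_sumset_right[OF fin])
        also have "... = 0"
        proof (rule sum.neutral, rule ballI, rule ccontr)
          fix i assume i: "i \<in> {i. i \<in> {..<length (B j)} \<and> f j i = k}"
            and nz: "cinner (psiB l) (B j ! i *v psiB l) \<noteq> 0"
          have al: "act j i l" using lS nz by (simp add: act_def)
          then have ex: "\<exists>l. act j i l" by blast
          define l' where "l' = (SOME l. act j i l)"
          have al': "act j i l'" unfolding l'_def using ex by (rule someI_ex)
          have fk: "f j i = l'" using ex by (simp add: f_def l'_def)
          have "B j ! i \<in> set (B j)" using i by auto
          have B3: "\<And>Q l m. Q \<in> set (B j) \<Longrightarrow> l \<in> S j \<Longrightarrow> m \<in> S j \<Longrightarrow> l\<noteq>m \<Longrightarrow>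
              cinner (psiB l) (Q *v psiB l) \<noteq> 0 \<Longrightarrow> cinner (psiB m) (Q *v psiB m) \<noteq> 0 \<Longrightarrow> False"
            using B[OF j] unfolding setB by blast
          then have "l = l'" using B3[of "B j ! i" l l'] \<open>B j ! i \<in> set (B j)\<close> al al' unfolding act_def by blast
          then show False using fk i kl by auto
        qed
        finally have "cinner (psiB l) (R j k *v psiB l) = 0" .
        then show ?thesis by (simp add: tensor_mult tensor_inner)
      qed
    qed
  qed
qed

end
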